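(* Let $\Gamma$ be a simple, undirected, connected graph of order $p$ that contains a cycle, and let $g(\Gamma)$ be its girth. Then $$\gamma_{[3R]}(\Gamma)\le 3p+2-\frac{5g(\Gamma)}{3}.$$
   Context: The girth of a graph is the minimum length of a cycle in it. For a graph $\Gamma=(V,E)$ and $h:V\to\{0,1,2,3,4\}$, let $AN(v)=\{w\in N(v):h(w)\ge 1\}$, $AN[v]=AN(v)\cup\{v\}$ and $h(S)=\sum_{u\in S}h(u)$. $h$ is a triple Roman dominating function (3RDF) if every $v$ with $h(v)<3$ satisfies $h(AN[v])\ge|AN(v)|+3$. The triple Roman domination number $\gamma_{[3R]}(\Gamma)$ is the minimum weight $h(V)$ of a 3RDF of $\Gamma$. *)

theory Defs
  imports Complex_Main
begin

definition simple_graph :: "'a set \<Rightarrow> ('a \<Rightarrow> 'a \<Rightarrow> bool) \<Rightarrow> bool" where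
  "simple_graph V E \<longleftrightarrow> finite V \<and> (\<forall>u v. E u v \<longrightarrow> u \<in> V \<and> v \<in> V)
      \<and> (\<forall>u v. E u v \<longrightarrow> E v u) \<and> (\<forall>v. \<not> E v v)"

definition connected_graph :: "'a set \<Rightarrow> ('a \<Rightarrow> 'a \<Rightarrow> bool) \<Rightarrow> bool" where
  "connected_graph V E \<longleftrightarrow> V \<noteq> {} \<and> (\<forall>u\<in>V. \<forall>v\<in>V. E\<^sup>*\<^sup>* u v)"

definition nbhd :: "('a \<Rightarrow> 'a \<Rightarrow> bool) \<Rightarrow> 'a set \<Rightarrow> 'a \<Rightarrow> 'a set" where
  "nbhd E V v = {w \<in> V. E v w}"

definition is_cycle :: "'a set \<Rightarrow> ('a \<Rightarrow> 'a \<Rightarrow> bool) \<Rightarrow> 'a list \<Rightarrow> bool" where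
  "is_cycle V E c \<longleftrightarrow> length c \<ge> 3 \<and> distinct c \<and> set c \<subseteq> V
      \<and> (\<forall>i < length c - 1. E (c ! i) (c ! (i + 1)))
      \<and> E (last c) (hd c)"

definition has_cycle :: "'a set \<Rightarrow> ('a \<Rightarrow> 'a \<Rightarrow> bool) \<Rightarrow> bool" where
  "has_cycle V E \<longleftrightarrow> (\<exists>c. is_cycle V E c)"

definition girth :: "'a set \<Rightarrow> ('a \<Rightarrow> 'a \<Rightarrow> bool) \<Rightarrow> nat" where
  "girth V E = (LEAST k. \<exists>c. is_cycle V E c \<and> length c = k)"

definition active_nbhd :: "'a set \<Rightarrow> ('a \<Rightarrow> 'a \<Rightarrow> bool) \<Rightarrow> ('a \<Rightarrow> nat) \<Rightarrow> 'a \<Rightarrow> 'a set" where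
  "active_nbhd V E h v = {w \<in> nbhd E V v. h w \<ge> 1}"

definition is_3RDF :: "'a set \<Rightarrow> ('a \<Rightarrow> 'a \<Rightarrow> bool) \<Rightarrow> ('a \<Rightarrow> nat) \<Rightarrow> bool" where
  "is_3RDF V E h \<longleftrightarrow> (\<forall>v\<in>V. h v \<le> 4) \<and> (\<forall>v. v \<notin> V \<longrightarrow> h v = 0)
     \<and> (\<forall>v\<in>V. h v < 3 \<longrightarrow>
          sum h (insert v (active_nbhd V E h v)) \<ge> card (active_nbhd V E h v) + 3)"

definition triple_roman_domination_number :: "'a set \<Rightarrow> ('a \<Rightarrow> 'a \<Rightarrow> bool) \<Rightarrow> nat" where
  "triple_roman_domination_number V E = (LEAST w. \<exists>h. is_3RDF V E h \<and> sum h V = w)"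

end

theory Submission
  imports Defs
begin

definition pat :: "nat \<Rightarrow> nat \<Rightarrow> nat" where
  "pat g i = (if i < 3 * (g div 3) then (if i mod 3 = 1 then 4 else 0)
              else if g mod 3 = 1 then 3 else 2)"

lemma pat_local:
  assumes "i < g" "pat g i < 3" "g \<ge> 3"
  shows "\<exists>j. ((j = i + 1 \<and> j < g) \<or> j + 1 = i) \<and> pat g j \<ge> 1 \<and> pat g i + pat g j \<ge> 4"
proof -
  obtain q r where gq: "g = 3 * q + r" and r: "r < 3" and qd: "q = g div 3" and rd: "r = g mod 3" by simp
  obtain a b where ia: "i = 3 * a + b" and b: "b < 3" and bd: "b = i mod 3"
    by (rule that[of "i div 3" "i mod 3"]) auto
  have P: "pat g k = (if k < 3 * q then (if k mod 3 = 1 then 4 else 0) else if r = 1 then 3 else 2)" for k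
    by (simp add: pat_def qd rd)
  show ?thesis
  proof (cases "i < 3 * q")
    case True
    have "b \<noteq> 1" using True assms(2) by (auto simp: P bd)
    then consider "b = 0" | "b = 2" using b by linarith
    then show ?thesis
    proof cases
      case 1
      have "a < q" using True 1 ia by simp
      then have "i + 1 < 3 * q" using 1 ia by linarith
      moreover have "(i+1) mod 3 = 1" using 1 ia by simp
      moreover have "i + 1 < g" using \<open>i + 1 < 3 * q\<close> gq by linarith
      ultimately show ?thesis using True
        by (intro exI[of _ "i+1"]) (simp add: P)
    next
      case 2
      have "i - 1 = 3 * a + 1" using 2 ia by simp
      then have "(i-1) mod 3 = 1" by simp
      then show ?thesis using True \<open>i - 1 = 3 * a + 1\<close> ia 2
        by (intro exI[of _ "i-1"]) (auto simp: P)
    qed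
  next
    case False
    then have pv: "pat g i = (if r = 1 then 3 else 2)" by (simp add: P)
    have "r \<noteq> 0" using False assms(1) gq by linarith
    moreover have "r \<noteq> 1" using pv assms(2) by auto
    ultimately have r2: "r = 2" using r by linarith
    have pi: "pat g i = 2" using pv r2 by simp
    have "i = 3*q \<or> i = 3*q+1" using False r2 assms(1) gq by linarith
    then show ?thesis
    proof
      assume a: "i = 3*q"
      have "pat g (i+1) = 2" using a r2 by (simp add: P)
      moreover have "i + 1 < g" using a r2 gq by linarith
      ultimately show ?thesis using pi
        by (intro exI[of _ "i+1"]) simp
    next
      assume a: "i = 3*q+1"
      have "pat g (i-1) = 2" using a r2 by (simp add: P)
      then show ?thesis using pi a
        by (intro exI[of _ "i-1"]) simp
    qed
  qed
qed

lemma sum_block: "(\<Sum>i<3*q. (if i mod 3 = 1 then 4 else 0::nat)) = 4 * q"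
proof (induction q)
  case 0 then show ?case by simp
next
  case (Suc q)
  have "{..<3 * Suc q} = {..<3*q} \<union> {3*q, 3*q+1, 3*q+2}" by auto
  moreover have "(3*q) mod 3 = 0" "(3*q+1) mod 3 = 1" "(3*q+2) mod 3 = 2" by presburger+
  ultimately show ?case using Suc by simp
qed

lemma pat_sum: "3 * (\<Sum>i<g. pat g i) \<le> 4 * g + 6"
proof -
  obtain q r where gq: "g = 3 * q + r" and r: "r < 3" and qd: "q = g div 3" and rd: "r = g mod 3" by simp
  have P: "pat g k = (if k < 3 * q then (if k mod 3 = 1 then 4 else 0) else if r = 1 then 3 else 2)" for k
    by (simp add: pat_def qd rd)
  have split: "{..<g} = {..<3*q} \<union> {3*q..<g}" using gq by auto
  have "(\<Sum>i<g. pat g i) = (\<Sum>i<3*q. pat g i) + (\<Sum>i\<in>{3*q..<g}. pat g i)"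
    by (subst split, rule sum.union_disjoint) auto
  also have "(\<Sum>i<3*q. pat g i) = (\<Sum>i<3*q. (if i mod 3 = 1 then 4 else 0::nat))"
    by (rule sum.cong) (auto simp: P)
  also have "\<dots> = 4 * q" by (rule sum_block)
  also have "(\<Sum>i\<in>{3*q..<g}. pat g i) = (\<Sum>i\<in>{3*q..<g}. (if r = 1 then 3 else 2))"
    by (rule sum.cong) (auto simp: P)
  also have "\<dots> = r * (if r = 1 then 3 else 2)" using gq by simp
  finally have e: "(\<Sum>i<g. pat g i) = 4 * q + r * (if r = 1 then 3 else 2)" .
  have "r = 0 \<or> r = 1 \<or> r = 2" using r by arith
  then show ?thesis using e gq by (elim disjE) simp_all
qed

theorem proposition24:
  fixes V :: "'a set" and E :: "'a \<Rightarrow> 'a \<Rightarrow> bool"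
  assumes "simple_graph V E" and "connected_graph V E" and "has_cycle V E"
  shows "real (triple_roman_domination_number V E)
           \<le> 3 * real (card V) + 2 - 5 * real (girth V E) / 3"
proof -
  have fin: "finite V" and inV: "\<And>u v. E u v \<Longrightarrow> u \<in> V \<and> v \<in> V"
    and sym: "\<And>u v. E u v \<Longrightarrow> E v u" and irr: "\<And>v. \<not> E v v"
    using assms(1) by (auto simp: simple_graph_def)
  have "\<exists>c. is_cycle V E c \<and> length c = girth V E"
    unfolding girth_def by (rule LeastI_ex) (use assms(3) in \<open>auto simp: has_cycle_def\<close>)
  then obtain c where cyc: "is_cycle V E c" and gl: "length c = girth V E" by blast
  define g where "g = length c"
  have g3: "g \<ge> 3" and dist: "distinct c" and cV: "set c \<subseteq> V"
    and adj: "\<And>i. i < g - 1 \<Longrightarrow> E (c ! i) (c ! (i + 1))"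
    using cyc by (auto simp: is_cycle_def g_def)
  define h where "h x = (if x \<in> set c then pat g (SOME i. i < g \<and> c ! i = x) else if x \<in> V then 3 else 0)" for x
  have hc: "\<And>i. i < g \<Longrightarrow> h (c ! i) = pat g i"
  proof -
    fix i assume i: "i < g"
    have "(SOME k. k < g \<and> c ! k = c ! i) = i"
      by (rule some_equality) (use i dist in \<open>auto simp: g_def nth_eq_iff_index_eq\<close>)
    then show "h (c ! i) = pat g i" using i by (simp add: h_def g_def)
  qed
  have pat_le: "\<And>i. pat g i \<le> 4" by (simp add: pat_def)
  have is3: "is_3RDF V E h"
    unfolding is_3RDF_def
  proof (intro conjI ballI allI impI)
    fix v assume "v \<in> V" then show "h v \<le> 4" using pat_le by (simp add: h_def)
  next
    fix v assume "v \<notin> V" then show "h v = 0" using cV by (auto simp: h_def)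
  next
    fix v assume vV: "v \<in> V" and hv: "h v < 3"
    then have "v \<in> set c" by (auto simp: h_def split: if_splits)
    then obtain i where i: "i < g" "v = c ! i" by (auto simp: in_set_conv_nth g_def)
    then have "pat g i < 3" using hv hc by simp
    from pat_local[OF i(1) this g3] obtain j where
      j: "(j = i + 1 \<and> j < g) \<or> j + 1 = i" "pat g j \<ge> 1" "pat g i + pat g j \<ge> 4" by blast
    have jg: "j < g" using j(1) i(1) by auto
    have Eij: "E v (c ! j)"
      using j(1)
    proof
      assume "j = i + 1 \<and> j < g" then show ?thesis using adj[of i] i by auto
    next
      assume "j + 1 = i" then show ?thesis using adj[of j] i sym by auto
    qed
    let ?A = "active_nbhd V E h v"
    let ?w = "c ! j"
    have wA: "?w \<in> ?A" using Eij inV hc[OF jg] j(2)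
      by (auto simp: active_nbhd_def nbhd_def)
    have finA: "finite ?A" using fin by (auto simp: active_nbhd_def nbhd_def)
    have vA: "v \<notin> ?A" using irr by (auto simp: active_nbhd_def nbhd_def)
    have ge1: "\<And>x. x \<in> ?A - {?w} \<Longrightarrow> 1 \<le> h x" by (auto simp: active_nbhd_def)
    have "card (?A - {?w}) \<le> sum h (?A - {?w})"
      using sum_mono[of "?A - {?w}" "\<lambda>_. 1::nat" h] ge1 by simp
    moreover have "sum h ?A = h ?w + sum h (?A - {?w})"
      using finA wA by (simp add: sum.remove)
    moreover have "card (?A - {?w}) = card ?A - 1" using finA wA by simp
    moreover have "card ?A \<ge> 1" using finA wA by (metis card_0_eq empty_iff less_one not_le)
    moreover have "sum h (insert v ?A) = h v + sum h ?A" using finA vA by simp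
    moreover have "h v + h ?w \<ge> 4" using j(3) hc[OF jg] hc[OF i(1)] i(2) by simp
    ultimately show "card ?A + 3 \<le> sum h (insert v ?A)" by linarith
  qed
  have T: "triple_roman_domination_number V E \<le> sum h V"
    unfolding triple_roman_domination_number_def by (rule Least_le) (use is3 in blast)
  have Vs: "V = set c \<union> (V - set c)" using cV by auto
  have "sum h V = sum h (set c) + sum h (V - set c)"
    by (subst Vs, rule sum.union_disjoint) (use fin cV finite_subset in auto)
  moreover have "sum h (V - set c) = 3 * card (V - set c)"
    by (simp add: h_def)
  moreover have "sum h (set c) = (\<Sum>i<g. pat g i)"
  proof -
    have "set c = (\<lambda>i. c ! i) ` {..<g}" by (auto simp: g_def in_set_conv_nth)
    moreover have "inj_on (\<lambda>i. c ! i) {..<g}" using dist by (simp add: inj_on_def g_def nth_eq_iff_index_eq)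
    ultimately have "sum h (set c) = (\<Sum>i<g. h (c ! i))" by (simp add: sum.reindex)
    also have "\<dots> = (\<Sum>i<g. pat g i)" using hc by simp
    finally show ?thesis .
  qed
  moreover have "card (V - set c) = card V - g"
    using cV fin dist by (simp add: card_Diff_subset distinct_card g_def)
  moreover have "g \<le> card V" using cV fin dist by (metis card_mono distinct_card g_def)
  ultimately have "3 * sum h V \<le> 9 * (card V - g) + 4 * g + 6" using pat_sum[of g] by linarith
  with T have "3 * triple_roman_domination_number V E \<le> 9 * (card V - g) + 4 * g + 6" by linarith
  then have "3 * real (triple_roman_domination_number V E) \<le> 9 * (real (card V) - real g) + 4 * real g + 6"
    using \<open>g \<le> card V\<close> by (simp add: of_nat_diff) linarith?
  then show ?thesis using gl g_def by simp
qed

end
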